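(* Let $N\ge1$, $0=\tau_0<\cdots<\tau_N=1$, $\Delta_i=\tau_{i+1}-\tau_i$, $D_2=\sum_i\Delta_i^2$, $0<\omega<1/N$ and $\mathcal W_\omega=\{w\in\mathbb R^N:w_i\ge\omega\ \forall i,\ \sum_iw_i=1\}$. Fix $\varepsilon_a>0$, nonnegative weights $K_\sigma(i,\ell)$ with $\sum_\ell K_\sigma(i,\ell)=1$, numbers $\widehat{\mathcal A}_i\ge0$ and $\mathcal A_i\ge0$. Define $\widehat b_i=\sum_\ell K_\sigma(i,\ell)\sqrt{\widehat{\mathcal A}_\ell+\varepsilon_a}$, $\widehat\phi_i=\widehat b_i^2$, $\widehat w_i=\Delta_i\widehat b_i/\sum_\ell\Delta_\ell\widehat b_\ell$, $b_i^\star=\sum_\ell K_\sigma(i,\ell)\sqrt{\mathcal A_\ell+\varepsilon_a}$, $\phi_i^\star=(b_i^\star)^2$, $\mathcal J(w)=\sum_i\mathcal A_i\Delta_i^2/w_i$, $\mathcal J_{\sigma,\varepsilon_a}(w)=\sum_i\phi_i^\star\Delta_i^2/w_i$, $\beta_{\sigma,\varepsilon_a}=\max_i|\phi_i^\star-\mathcal A_i|$, and let $w^\star\in\arg\min_{w\in\mathcal W_\omega}\mathcal J(w)$. Then for every $w\in\mathcal W_\omega$, $$|\mathcal J_{\sigma,\varepsilon_a}(w)-\mathcal J(w)|\le\frac{D_2}{\omega}\beta_{\sigma,\varepsilon_a}.$$ Consequently, if moreover $\widehat w\in\mathcal W_\omega$, $\zeta\ge0$, and $\max_i|\widehat\phi_i-\phi_i^\star|\le\zeta$,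 then $$\mathcal J(\widehat w)\le\mathcal J(w^\star)+\frac{2D_2}{\omega}\bigl(\zeta+\beta_{\sigma,\varepsilon_a}\bigr).$$ *)

theory Defs
  imports Complex_Main
begin

text \<open>Indices run over 0..N-1; vectors in R^N are functions nat => real,
  only their values at i < N matter.\<close>

definition Delta :: "(nat \<Rightarrow> real) \<Rightarrow> nat \<Rightarrow> real" where
  "Delta \<tau> i = \<tau> (Suc i) - \<tau> i"

definition D2 :: "nat \<Rightarrow> (nat \<Rightarrow> real) \<Rightarrow> real" where
  "D2 N \<tau> = (\<Sum>i<N. (Delta \<tau> i)^2)"

definition Wset :: "nat \<Rightarrow> real \<Rightarrow> (nat \<Rightarrow> real) set" where
  "Wset N \<omega> = {w. (\<forall>i<N. \<omega> \<le> w i) \<and> (\<Sum>i<N. w i) = 1}"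

definition bvec :: "nat \<Rightarrow> (nat \<Rightarrow> nat \<Rightarrow> real) \<Rightarrow> (nat \<Rightarrow> real) \<Rightarrow> real \<Rightarrow> nat \<Rightarrow> real" where
  "bvec N K A \<epsilon> i = (\<Sum>l<N. K i l * sqrt (A l + \<epsilon>))"

definition phivec :: "nat \<Rightarrow> (nat \<Rightarrow> nat \<Rightarrow> real) \<Rightarrow> (nat \<Rightarrow> real) \<Rightarrow> real \<Rightarrow> nat \<Rightarrow> real" where
  "phivec N K A \<epsilon> i = (bvec N K A \<epsilon> i)^2"

definition wvec :: "nat \<Rightarrow> (nat \<Rightarrow> real) \<Rightarrow> (nat \<Rightarrow> nat \<Rightarrow> real) \<Rightarrow> (nat \<Rightarrow> real) \<Rightarrow> real \<Rightarrow> nat \<Rightarrow> real" where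
  "wvec N \<tau> K A \<epsilon> i =
     Delta \<tau> i * bvec N K A \<epsilon> i / (\<Sum>l<N. Delta \<tau> l * bvec N K A \<epsilon> l)"

definition Jfun :: "nat \<Rightarrow> (nat \<Rightarrow> real) \<Rightarrow> (nat \<Rightarrow> real) \<Rightarrow> (nat \<Rightarrow> real) \<Rightarrow> real" where
  "Jfun N \<tau> c w = (\<Sum>i<N. c i * (Delta \<tau> i)^2 / w i)"

definition beta :: "nat \<Rightarrow> (nat \<Rightarrow> nat \<Rightarrow> real) \<Rightarrow> (nat \<Rightarrow> real) \<Rightarrow> real \<Rightarrow> real" where
  "beta N K A \<epsilon> = Max ((\<lambda>i. \<bar>phivec N K A \<epsilon> i - A i\<bar>) ` {..<N})"

end

theory Submission
  imports Defs
begin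

lemma J_diff:
  assumes om: "0 < \<omega>" and w: "\<forall>i<N. \<omega> \<le> w i"
    and M: "\<forall>i<N. \<bar>c i - d i\<bar> \<le> M"
  shows "\<bar>Jfun N \<tau> c w - Jfun N \<tau> d w\<bar> \<le> D2 N \<tau> / \<omega> * M"
proof -
  have "Jfun N \<tau> c w - Jfun N \<tau> d w = (\<Sum>i<N. (c i - d i) * (Delta \<tau> i)^2 / w i)"
    unfolding Jfun_def by (simp add: sum_subtractf[symmetric] diff_divide_distrib left_diff_distrib)
  also have "\<bar>\<dots>\<bar> \<le> (\<Sum>i<N. \<bar>(c i - d i) * (Delta \<tau> i)^2 / w i\<bar>)"
    by (rule sum_abs)
  also have "\<dots> \<le> (\<Sum>i<N. M * ((Delta \<tau> i)^2 / \<omega>))"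
  proof (rule sum_mono)
    fix i assume "i \<in> {..<N}"
    then have i: "i < N" by simp
    have wp: "w i > 0" using w om i by force
    have "\<bar>(c i - d i) * (Delta \<tau> i)^2 / w i\<bar> = \<bar>c i - d i\<bar> * ((Delta \<tau> i)^2 / w i)"
      using wp by (simp add: abs_mult)
    also have "\<dots> \<le> M * ((Delta \<tau> i)^2 / \<omega>)"
    proof (rule mult_mono)
      show "\<bar>c i - d i\<bar> \<le> M" using M i by auto
      show "(Delta \<tau> i)^2 / w i \<le> (Delta \<tau> i)^2 / \<omega>"
        using w i om by (intro divide_left_mono) auto
      show "0 \<le> M" using M i by (meson abs_ge_zero order_trans)
      show "0 \<le> (Delta \<tau> i)^2 / w i" using wp by simp
    qed
    finally show "\<bar>(c i - d i) * (Delta \<tau> i)^2 / w i\<bar> \<le> M * ((Delta \<tau> i)^2 / \<omega>)" .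
  qed
  also have "\<dots> = D2 N \<tau> / \<omega> * M"
    unfolding D2_def by (simp add: sum_distrib_left[symmetric] sum_divide_distrib[symmetric] algebra_simps)
  finally show ?thesis .
qed

lemma opt_lower:
  fixes b d w :: "nat \<Rightarrow> real"
  assumes w: "\<forall>i<N. w i > 0" and ws: "(\<Sum>i<N. w i) = 1"
  shows "(\<Sum>l<N. d l * b l)^2 \<le> (\<Sum>i<N. (b i)^2 * (d i)^2 / w i)"
proof -
  define S where "S = (\<Sum>l<N. d l * b l)"
  have "(\<Sum>i<N. 2 * S * (d i * b i) - S^2 * w i) \<le> (\<Sum>i<N. (b i)^2 * (d i)^2 / w i)"
  proof (rule sum_mono)
    fix i assume "i \<in> {..<N}"
    then have wp: "w i > 0" using w by auto
    have "0 \<le> (b i * d i - S * w i)^2" by simp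
    then have "(2 * S * (d i * b i) - S^2 * w i) * w i \<le> (b i)^2 * (d i)^2"
      by (simp add: power2_eq_square algebra_simps)
    then show "2 * S * (d i * b i) - S^2 * w i \<le> (b i)^2 * (d i)^2 / w i"
      using wp by (simp add: pos_le_divide_eq)
  qed
  moreover have "(\<Sum>i<N. 2 * S * (d i * b i) - S^2 * w i) = S^2"
    by (simp add: sum_subtractf sum_distrib_left[symmetric] ws S_def power2_eq_square)
  ultimately show ?thesis unfolding S_def by simp
qed

lemma opt_value:
  fixes b d :: "nat \<Rightarrow> real"
  assumes p: "\<forall>i<N. b i > 0 \<and> d i > 0"
  shows "(\<Sum>i<N. (b i)^2 * (d i)^2 / (d i * b i / (\<Sum>l<N. d l * b l))) = (\<Sum>l<N. d l * b l)^2"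
proof -
  define S where "S = (\<Sum>l<N. d l * b l)"
  have "(\<Sum>i<N. (b i)^2 * (d i)^2 / (d i * b i / S)) = (\<Sum>i<N. S * (d i * b i))"
  proof (rule sum.cong)
    fix i assume "i \<in> {..<N}"
    then have "b i > 0" "d i > 0" using p by auto
    then show "(b i)^2 * (d i)^2 / (d i * b i / S) = S * (d i * b i)"
      by (simp add: power2_eq_square field_simps)
  qed simp
  also have "\<dots> = S^2" by (simp add: sum_distrib_left[symmetric] S_def power2_eq_square)
  finally show ?thesis unfolding S_def .
qed

theorem lemma5:
  fixes N :: nat and \<tau> :: "nat \<Rightarrow> real" and \<omega> \<epsilon> \<zeta> :: real
    and K :: "nat \<Rightarrow> nat \<Rightarrow> real" and Ahat A wstar :: "nat \<Rightarrow> real"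
  assumes N: "N \<ge> 1"
    and tau0: "\<tau> 0 = 0" and tauN: "\<tau> N = 1"
    and tau_mono: "\<forall>i<N. \<tau> i < \<tau> (Suc i)"
    and om_pos: "0 < \<omega>" and om_less: "\<omega> < 1 / real N"
    and eps: "\<epsilon> > 0"
    and K_nonneg: "\<forall>i<N. \<forall>l<N. K i l \<ge> 0"
    and K_sum: "\<forall>i<N. (\<Sum>l<N. K i l) = 1"
    and Ahat_nonneg: "\<forall>i<N. Ahat i \<ge> 0"
    and A_nonneg: "\<forall>i<N. A i \<ge> 0"
    and wstar_in: "wstar \<in> Wset N \<omega>"
    and wstar_min: "\<forall>w \<in> Wset N \<omega>. Jfun N \<tau> A wstar \<le> Jfun N \<tau> A w"
  shows "(\<forall>w \<in> Wset N \<omega>.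
            \<bar>Jfun N \<tau> (phivec N K A \<epsilon>) w - Jfun N \<tau> A w\<bar>
              \<le> D2 N \<tau> / \<omega> * beta N K A \<epsilon>)
       \<and> ((wvec N \<tau> K Ahat \<epsilon> \<in> Wset N \<omega> \<and> \<zeta> \<ge> 0
            \<and> Max ((\<lambda>i. \<bar>phivec N K Ahat \<epsilon> i - phivec N K A \<epsilon> i\<bar>) ` {..<N}) \<le> \<zeta>)
          \<longrightarrow> Jfun N \<tau> A (wvec N \<tau> K Ahat \<epsilon>)
                \<le> Jfun N \<tau> A wstar + 2 * D2 N \<tau> / \<omega> * (\<zeta> + beta N K A \<epsilon>))"
proof
  have betab: "\<forall>i<N. \<bar>phivec N K A \<epsilon> i - A i\<bar> \<le> beta N K A \<epsilon>"
    unfolding beta_def by (auto intro: Max_ge)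
  show P1: "\<forall>w \<in> Wset N \<omega>.
            \<bar>Jfun N \<tau> (phivec N K A \<epsilon>) w - Jfun N \<tau> A w\<bar>
              \<le> D2 N \<tau> / \<omega> * beta N K A \<epsilon>"
    using J_diff[OF om_pos _ betab] unfolding Wset_def by blast
  show "(wvec N \<tau> K Ahat \<epsilon> \<in> Wset N \<omega> \<and> \<zeta> \<ge> 0
            \<and> Max ((\<lambda>i. \<bar>phivec N K Ahat \<epsilon> i - phivec N K A \<epsilon> i\<bar>) ` {..<N}) \<le> \<zeta>)
          \<longrightarrow> Jfun N \<tau> A (wvec N \<tau> K Ahat \<epsilon>)
                \<le> Jfun N \<tau> A wstar + 2 * D2 N \<tau> / \<omega> * (\<zeta> + beta N K A \<epsilon>)"
  proof
    assume H: "wvec N \<tau> K Ahat \<epsilon> \<in> Wset N \<omega> \<and> \<zeta> \<ge> 0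
            \<and> Max ((\<lambda>i. \<bar>phivec N K Ahat \<epsilon> i - phivec N K A \<epsilon> i\<bar>) ` {..<N}) \<le> \<zeta>"
    let ?wh = "wvec N \<tau> K Ahat \<epsilon>"
    let ?ph = "phivec N K Ahat \<epsilon>"
    let ?b = "bvec N K Ahat \<epsilon>"
    let ?d = "Delta \<tau>"
    have zb: "\<forall>i<N. \<bar>?ph i - phivec N K A \<epsilon> i\<bar> \<le> \<zeta>"
      using H by (auto intro: order_trans[OF Max_ge])
    have tot: "\<forall>i<N. \<bar>A i - ?ph i\<bar> \<le> \<zeta> + beta N K A \<epsilon>"
    proof (intro allI impI)
      fix i assume "i < N"
      then have "\<bar>?ph i - phivec N K A \<epsilon> i\<bar> \<le> \<zeta>" "\<bar>phivec N K A \<epsilon> i - A i\<bar> \<le> beta N K A \<epsilon>"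
        using zb betab by auto
      then show "\<bar>A i - ?ph i\<bar> \<le> \<zeta> + beta N K A \<epsilon>" by linarith
    qed
    have whW: "\<forall>i<N. \<omega> \<le> ?wh i" using H unfolding Wset_def by auto
    have wsW: "\<forall>i<N. \<omega> \<le> wstar i" "(\<Sum>i<N. wstar i) = 1" using wstar_in unfolding Wset_def by auto
    have e1: "\<bar>Jfun N \<tau> A ?wh - Jfun N \<tau> ?ph ?wh\<bar> \<le> D2 N \<tau> / \<omega> * (\<zeta> + beta N K A \<epsilon>)"
      by (rule J_diff[OF om_pos whW tot])
    have e2: "\<bar>Jfun N \<tau> A wstar - Jfun N \<tau> ?ph wstar\<bar> \<le> D2 N \<tau> / \<omega> * (\<zeta> + beta N K A \<epsilon>)"
      by (rule J_diff[OF om_pos wsW(1) tot])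
    have bpos: "\<forall>i<N. ?b i > 0"
    proof (intro allI impI)
      fix i assume i: "i < N"
      have "sqrt \<epsilon> = (\<Sum>l<N. K i l * sqrt \<epsilon>)"
        using K_sum i by (simp add: sum_distrib_right[symmetric])
      also have "\<dots> \<le> ?b i" unfolding bvec_def
        using K_nonneg i Ahat_nonneg by (intro sum_mono mult_left_mono) auto
      finally show "?b i > 0" using eps by (smt (verit) real_sqrt_gt_zero)
    qed
    have dpos: "\<forall>i<N. ?d i > 0" using tau_mono unfolding Delta_def by auto
    have Jh: "\<forall>w. Jfun N \<tau> ?ph w = (\<Sum>i<N. (?b i)^2 * (?d i)^2 / w i)"
      unfolding Jfun_def phivec_def by simp
    have "Jfun N \<tau> ?ph ?wh = (\<Sum>l<N. ?d l * ?b l)^2"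
    proof -
      have "Jfun N \<tau> ?ph ?wh = (\<Sum>i<N. (?b i)^2 * (?d i)^2 / (?d i * ?b i / (\<Sum>l<N. ?d l * ?b l)))"
        using Jh unfolding wvec_def by simp
      also have "\<dots> = (\<Sum>l<N. ?d l * ?b l)^2"
        by (rule opt_value) (use bpos dpos in auto)
      finally show ?thesis .
    qed
    also have "\<dots> \<le> Jfun N \<tau> ?ph wstar"
    proof -
      have "\<forall>i<N. wstar i > 0" using wsW(1) om_pos by force
      then have "(\<Sum>l<N. ?d l * ?b l)^2 \<le> (\<Sum>i<N. (?b i)^2 * (?d i)^2 / wstar i)"
        using opt_lower[of N wstar ?d ?b] wsW(2) by blast
      then show ?thesis using Jh by simp
    qed
    finally have "Jfun N \<tau> ?ph ?wh \<le> Jfun N \<tau> ?ph wstar" .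
    then show "Jfun N \<tau> A ?wh \<le> Jfun N \<tau> A wstar + 2 * D2 N \<tau> / \<omega> * (\<zeta> + beta N K A \<epsilon>)"
    proof -
      define E where "E = D2 N \<tau> / \<omega> * (\<zeta> + beta N K A \<epsilon>)"
      have q: "2 * D2 N \<tau> / \<omega> * (\<zeta> + beta N K A \<epsilon>) = 2 * E" unfolding E_def by simp
      have a1: "\<bar>Jfun N \<tau> A ?wh - Jfun N \<tau> ?ph ?wh\<bar> \<le> E" using e1 unfolding E_def .
      have a2: "\<bar>Jfun N \<tau> A wstar - Jfun N \<tau> ?ph wstar\<bar> \<le> E" using e2 unfolding E_def .
      show ?thesis unfolding q using a1 a2 \<open>Jfun N \<tau> ?ph ?wh \<le> Jfun N \<tau> ?ph wstar\<close> by linarith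
    qed
  qed
qed

end
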